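(* Let $\mathcal{X}\subset\mathbb{R}^d$ be a full-dimensional polytope with vertex set $\mathcal{V}$ and let ${\bm{u}}\in\mathbb{R}^d$. Then every inclusion-wise minimal optimal spanning set of ${\bm{u}}$ has exactly $d+1$ elements, and hence is an affine basis of $\mathcal{X}$.
   Context: For ${\bm{u}}\in\mathbb{R}^d$ write ${\bm{x}}\succeq{\bm{x}}'$ if $\langle{\bm{u}},{\bm{x}}\rangle\ge\langle{\bm{u}},{\bm{x}}'\rangle$. For a finite $B\subseteq\mathcal{X}$ and ${\bm{x}}\in\mathbb{R}^d$ let $B_{\succeq{\bm{x}}}=\{{\bm{x}}'\in B:\langle{\bm{u}},{\bm{x}}'-{\bm{x}}\rangle\ge0\}$. A finite set $B\subseteq\mathcal{X}$ is an optimal spanning set of ${\bm{u}}$ if every vertex ${\bm{x}}\in\mathcal{V}$ lies in the affine hull of $B_{\succeq{\bm{x}}}$. *)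

theory Defs
  imports "HOL-Analysis.Analysis"
begin

definition vertices :: "'a::euclidean_space set \<Rightarrow> 'a set" where
  "vertices X = {x. x extreme_point_of X}"

definition upper_set :: "'a::euclidean_space \<Rightarrow> 'a set \<Rightarrow> 'a \<Rightarrow> 'a set" where
  "upper_set u B x = {x' \<in> B. inner u (x' - x) \<ge> 0}"

definition optimal_spanning_set :: "'a::euclidean_space set \<Rightarrow> 'a \<Rightarrow> 'a set \<Rightarrow> bool" where
  "optimal_spanning_set X u B \<longleftrightarrow> finite B \<and> B \<subseteq> X \<and>
     (\<forall>x \<in> vertices X. x \<in> affine hull (upper_set u B x))"

definition minimal_optimal_spanning_set :: "'a::euclidean_space set \<Rightarrow> 'a \<Rightarrow> 'a set \<Rightarrow> bool" where
  "minimal_optimal_spanning_set X u B \<longleftrightarrow> optimal_spanning_set X u B \<and>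
     (\<forall>B'. B' \<subset> B \<longrightarrow> \<not> optimal_spanning_set X u B')"

end

theory Submission
  imports Defs
begin

lemma drop_point:
  fixes X :: "'a::euclidean_space set"
  assumes opt: "optimal_spanning_set X u B" and bB: "b \<in> B"
    and bh: "b \<in> affine hull {b' \<in> B - {b}. inner u (b' - b) \<ge> 0}"
  shows "optimal_spanning_set X u (B - {b})"
  unfolding optimal_spanning_set_def
proof (intro conjI ballI)
  show "finite (B - {b})" "B - {b} \<subseteq> X" using opt unfolding optimal_spanning_set_def by auto
  fix x assume xv: "x \<in> vertices X"
  have x1: "x \<in> affine hull (upper_set u B x)" using opt xv unfolding optimal_spanning_set_def by auto
  show "x \<in> affine hull (upper_set u (B - {b}) x)"
  proof (cases "inner u (b - x) \<ge> 0")
    case True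
    have sub: "{b' \<in> B - {b}. inner u (b' - b) \<ge> 0} \<subseteq> upper_set u (B - {b}) x"
      using True by (auto simp: upper_set_def inner_diff_right)
    have "b \<in> affine hull (upper_set u (B - {b}) x)"
      using bh hull_mono[OF sub] by blast
    hence "affine hull (insert b (upper_set u (B - {b}) x)) = affine hull (upper_set u (B - {b}) x)"
      by (rule hull_redundant)
    moreover have "upper_set u B x \<subseteq> insert b (upper_set u (B - {b}) x)"
      by (auto simp: upper_set_def)
    ultimately show ?thesis using x1 hull_mono by blast
  next
    case False
    hence "upper_set u B x = upper_set u (B - {b}) x" by (auto simp: upper_set_def)
    thus ?thesis using x1 by simp
  qed
qed

lemma find_point:
  fixes B :: "'a::euclidean_space set"
  assumes fin: "finite B" and dep: "affine_dependent B"
  shows "\<exists>b\<in>B. b \<in> affine hull {b' \<in> B - {b}. inner u (b' - b) \<ge> 0}"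
proof -
  obtain S c where S: "finite S" "S \<subseteq> B" "sum c S = 0" "\<exists>v\<in>S. c v \<noteq> 0"
    "(\<Sum>v\<in>S. c v *\<^sub>R v) = 0"
    using dep unfolding affine_dependent_explicit by blast
  define S' where "S' = {v\<in>S. c v \<noteq> 0}"
  have fS': "finite S'" using S(1) by (simp add: S'_def)
  have neS': "S' \<noteq> {}" using S(4) by (auto simp: S'_def)
  obtain b where b: "b \<in> S'" and bmin: "\<And>v. v \<in> S' \<Longrightarrow> inner u b \<le> inner u v"
    using fS' neS' by (metis (mono_tags) arg_min_if_finite(1) arg_min_least)
  have cb: "c b \<noteq> 0" using b by (simp add: S'_def)
  have sumS': "sum c S' = 0"
  proof -
    have "sum c S = sum c S'" by (rule sum.mono_neutral_right) (use S(1) in \<open>auto simp: S'_def\<close>)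
    thus ?thesis using S(3) by simp
  qed
  have vsumS': "(\<Sum>v\<in>S'. c v *\<^sub>R v) = 0"
  proof -
    have "(\<Sum>v\<in>S. c v *\<^sub>R v) = (\<Sum>v\<in>S'. c v *\<^sub>R v)"
      by (rule sum.mono_neutral_right) (use S(1) in \<open>auto simp: S'_def\<close>)
    thus ?thesis using S(5) by simp
  qed
  define T where "T = S' - {b}"
  have fT: "finite T" using fS' by (simp add: T_def)
  have sT: "sum c T = - c b"
    using sumS' b fS' unfolding T_def by (simp add: sum_diff1)
  have vT: "(\<Sum>v\<in>T. c v *\<^sub>R v) = - (c b *\<^sub>R b)"
    using vsumS' b fS' unfolding T_def by (simp add: sum_diff1)
  define w where "w = (\<lambda>v. - c v / c b)"
  have "sum w T = 1" using sT cb 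
  proof -
    have "sum w T = - (sum c T / c b)" by (simp add: w_def sum_negf sum_divide_distrib)
    thus ?thesis using sT cb by simp
  qed
  moreover have "(\<Sum>v\<in>T. w v *\<^sub>R v) = b"
  proof -
    have "(\<Sum>v\<in>T. w v *\<^sub>R v) = (- 1 / c b) *\<^sub>R (\<Sum>v\<in>T. c v *\<^sub>R v)"
      by (simp add: w_def scaleR_sum_right)
    also have "\<dots> = b" using vT cb by simp
    finally show ?thesis .
  qed
  ultimately have "b \<in> affine hull T" using fT by (auto simp: affine_hull_finite)
  moreover have "T \<subseteq> {b' \<in> B - {b}. inner u (b' - b) \<ge> 0}"
    using bmin S(2) by (auto simp: T_def S'_def inner_diff_right)
  ultimately have "b \<in> affine hull {b' \<in> B - {b}. inner u (b' - b) \<ge> 0}"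
    using hull_mono by blast
  moreover have "b \<in> B" using b S(2) by (auto simp: S'_def)
  ultimately show ?thesis by blast
qed

theorem mainTheorem11:
  fixes X :: "'a::euclidean_space set" and u :: 'a and B :: "'a set"
  assumes "polytope X"
    and "aff_dim X = int DIM('a)"
    and "minimal_optimal_spanning_set X u B"
  shows "card B = DIM('a) + 1 \<and> \<not> affine_dependent B \<and> affine hull B = affine hull X"
proof -
  have opt: "optimal_spanning_set X u B" and mn: "\<And>B'. B' \<subset> B \<Longrightarrow> \<not> optimal_spanning_set X u B'"
    using assms(3) unfolding minimal_optimal_spanning_set_def by auto
  have fin: "finite B" and BX: "B \<subseteq> X" using opt unfolding optimal_spanning_set_def by auto
  have indep: "\<not> affine_dependent B"
  proof
    assume "affine_dependent B"
    then obtain b where "b \<in> B" "b \<in> affine hull {b' \<in> B - {b}. inner u (b' - b) \<ge> 0}"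
      using find_point fin by blast
    then have "optimal_spanning_set X u (B - {b})" using drop_point opt by blast
    moreover have "B - {b} \<subset> B" using \<open>b \<in> B\<close> by auto
    ultimately show False using mn by blast
  qed
  have V: "vertices X \<subseteq> affine hull B"
  proof
    fix x assume "x \<in> vertices X"
    hence "x \<in> affine hull (upper_set u B x)" using opt unfolding optimal_spanning_set_def by auto
    moreover have "upper_set u B x \<subseteq> B" by (auto simp: upper_set_def)
    ultimately show "x \<in> affine hull B" using hull_mono by blast
  qed
  have XV: "X = convex hull (vertices X)"
    using Krein_Milman_Minkowski[OF polytope_imp_compact[OF assms(1)] polytope_imp_convex[OF assms(1)]]
    by (simp add: vertices_def)
  have "affine hull X = affine hull (vertices X)"
    by (subst XV) simp
  also have "\<dots> \<subseteq> affine hull B" using V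
    by (metis hull_hull hull_mono)
  finally have "affine hull X \<subseteq> affine hull B" .
  moreover have "affine hull B \<subseteq> affine hull X" using BX hull_mono by blast
  ultimately have eq: "affine hull B = affine hull X" by blast
  have "aff_dim B = aff_dim X" by (metis aff_dim_affine_hull eq)
  hence "int (card B) = int DIM('a) + 1"
    using aff_dim_affine_independent[OF indep] assms(2) by simp
  hence "card B = DIM('a) + 1" by simp
  thus ?thesis using indep eq by blast
qed

end
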